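(* Let $(X,d)$ be a $\delta$-Gromov hyperbolic space, $p\in X$, $\epsilon>0$, and $X^\epsilon=(X,d_\epsilon)$ the uniformized space. Let $x\in\partial_{d_\epsilon}X^\epsilon$. Then every sequence $(x_n)\subseteq X$ converging to $x$ with respect to $d_\epsilon$ has a subsequence $(x_{n_k})_k$ which is a Gromov sequence.
   Context: Gromov product $(x|y)_p=\frac12(d(p,x)+d(p,y)-d(x,y))$. $\delta$-Gromov hyperbolic: unbounded, proper, geodesic, and $(x|z)_p\ge\min\{(x|y)_p,(y|z)_p\}-\delta$ for all $x,y,z,p$. Uniformized metric: $d_\epsilon(x,y)=\inf_\gamma\int_\gamma e^{-\epsilon d(p,z)}ds(z)$ over $d$-rectifiable curves from $x$ to $y$; $\partial_{d_\epsilon}X^\epsilon=\overline{X^\epsilon}\setminus X^\epsilon$ (closure in the completion). A Gromov sequence is $(x_n)$ with $(x_n|x_m)_p\to\infty$ as $n,m\to\infty$. *)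

theory Defs
  imports "HOL-Analysis.Analysis"
begin

text \<open>The space X is the whole of a type 'a of class metric_space, with d = dist.\<close>

definition gromov_product :: "'a::metric_space \<Rightarrow> 'a \<Rightarrow> 'a \<Rightarrow> real" where
  "gromov_product p x y = (dist p x + dist p y - dist x y) / 2"

definition proper_space :: "'a::metric_space itself \<Rightarrow> bool" where
  "proper_space _ \<longleftrightarrow> (\<forall>S::'a set. bounded S \<and> closed S \<longrightarrow> compact S)"

definition geodesic_space :: "'a::metric_space itself \<Rightarrow> bool" where
  "geodesic_space _ \<longleftrightarrow> (\<forall>x y::'a. \<exists>\<gamma>::real \<Rightarrow> 'a. \<gamma> 0 = x \<and> \<gamma> (dist x y) = y \<and>
      (\<forall>s\<in>{0..dist x y}. \<forall>t\<in>{0..dist x y}. dist (\<gamma> s) (\<gamma> t) = \<bar>s - t\<bar>))"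

definition gromov_hyperbolic :: "real \<Rightarrow> 'a::metric_space itself \<Rightarrow> bool" where
  "gromov_hyperbolic \<delta> T \<longleftrightarrow>
     \<not> bounded (UNIV :: 'a set) \<and> proper_space T \<and> geodesic_space T \<and>
     (\<forall>x y z p :: 'a. gromov_product p x z \<ge>
         min (gromov_product p x y) (gromov_product p y z) - \<delta>)"

definition partition_sums :: "(real \<Rightarrow> 'a::metric_space) \<Rightarrow> real \<Rightarrow> real \<Rightarrow> real set" where
  "partition_sums \<gamma> a b = {(\<Sum>i<n. dist (\<gamma> (t i)) (\<gamma> (t (Suc i)))) | t n.
       t 0 = a \<and> t n = b \<and> (\<forall>i<n. t i \<le> t (Suc i))}"

definition curve_length :: "(real \<Rightarrow> 'a::metric_space) \<Rightarrow> real \<Rightarrow> real \<Rightarrow> real" where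
  "curve_length \<gamma> a b = Sup (partition_sums \<gamma> a b)"

definition rectifiable_curve :: "(real \<Rightarrow> 'a::metric_space) \<Rightarrow> real \<Rightarrow> real \<Rightarrow> bool" where
  "rectifiable_curve \<gamma> a b \<longleftrightarrow> a \<le> b \<and> continuous_on {a..b} \<gamma> \<and> bdd_above (partition_sums \<gamma> a b)"

text \<open>Arc-length reparametrisation: s \<in> [0, length] is mapped to \<gamma>(t) where the length of
  \<gamma> on [a,t] equals s (well defined since \<gamma> is constant where the length is constant).\<close>
definition arclength_param :: "(real \<Rightarrow> 'a::metric_space) \<Rightarrow> real \<Rightarrow> real \<Rightarrow> real \<Rightarrow> 'a" where
  "arclength_param \<gamma> a b s = \<gamma> (SOME t. t \<in> {a..b} \<and> curve_length \<gamma> a t = s)"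

definition line_integral :: "('a::metric_space \<Rightarrow> real) \<Rightarrow> (real \<Rightarrow> 'a) \<Rightarrow> real \<Rightarrow> real \<Rightarrow> real" where
  "line_integral \<rho> \<gamma> a b = integral {0..curve_length \<gamma> a b} (\<lambda>s. \<rho> (arclength_param \<gamma> a b s))"

definition uniformized_dist :: "real \<Rightarrow> 'a::metric_space \<Rightarrow> 'a \<Rightarrow> 'a \<Rightarrow> real" where
  "uniformized_dist \<epsilon> p x y = Inf {line_integral (\<lambda>z. exp (- \<epsilon> * dist p z)) \<gamma> a b | \<gamma> a b.
      rectifiable_curve \<gamma> a b \<and> \<gamma> a = x \<and> \<gamma> b = y}"

definition gromov_sequence :: "'a::metric_space \<Rightarrow> (nat \<Rightarrow> 'a) \<Rightarrow> bool" where
  "gromov_sequence p xs \<longleftrightarrow>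
     (\<forall>M. \<exists>N. \<forall>n m. n \<ge> N \<and> m \<ge> N \<longrightarrow> gromov_product p (xs n) (xs m) \<ge> M)"

end

theory Submission
  imports Defs "HOL-Library.Diagonal_Subsequence"
begin

lemma li_nonneg:
  assumes "\<epsilon> \<ge> 0"
  shows "0 \<le> line_integral (\<lambda>z. exp (- \<epsilon> * dist p z)) \<gamma> a b"
  unfolding line_integral_def
  by (cases "(\<lambda>s. exp (- \<epsilon> * dist p (arclength_param \<gamma> a b s))) integrable_on {0..curve_length \<gamma> a b}")
     (auto intro: integral_nonneg simp: not_integrable_integral)

lemma li_le:
  assumes "\<epsilon> \<ge> 0" "curve_length \<gamma> a b \<ge> 0"
  shows "line_integral (\<lambda>z. exp (- \<epsilon> * dist p z)) \<gamma> a b \<le> curve_length \<gamma> a b"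
proof (cases "(\<lambda>s. exp (- \<epsilon> * dist p (arclength_param \<gamma> a b s))) integrable_on {0..curve_length \<gamma> a b}")
  case True
  have "integral {0..curve_length \<gamma> a b} (\<lambda>s. exp (- \<epsilon> * dist p (arclength_param \<gamma> a b s)))
        \<le> integral {0..curve_length \<gamma> a b} (\<lambda>s. 1)"
    using True assms(1) by (intro integral_le) auto
  then show ?thesis using assms unfolding line_integral_def by simp
next
  case False
  then show ?thesis using assms unfolding line_integral_def by (simp add: not_integrable_integral)
qed

lemma mono_bounds:
  fixes t :: "nat \<Rightarrow> real"
  assumes "\<forall>i<n. t i \<le> t (Suc i)" "i \<le> n"
  shows "t 0 \<le> t i \<and> t i \<le> t n"
proof -
  have A: "\<forall>j. i + j \<le> n \<longrightarrow> t i \<le> t (i + j)" for i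
  proof
    fix j show "i + j \<le> n \<longrightarrow> t i \<le> t (i + j)"
      by (induction j) (use assms(1) in \<open>auto intro: order_trans\<close>)
  qed
  show ?thesis using spec[OF A[of 0], of i] spec[OF A[of i], of "n - i"] assms(2) by simp
qed

lemma ud_le:
  fixes p x y :: "'a::metric_space"
  assumes geo: "geodesic_space TYPE('a)" and "\<epsilon> \<ge> 0"
  shows "uniformized_dist \<epsilon> p x y \<le> dist x y"
proof -
  define L where "L = dist x y"
  obtain \<gamma> :: "real \<Rightarrow> 'a" where g0: "\<gamma> 0 = x" and gL: "\<gamma> L = y"
    and iso: "\<And>s t. s\<in>{0..L} \<Longrightarrow> t\<in>{0..L} \<Longrightarrow> dist (\<gamma> s) (\<gamma> t) = \<bar>s - t\<bar>"
    using geo unfolding geodesic_space_def L_def by blast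
  have L0: "L \<ge> 0" unfolding L_def by simp
  have ps: "partition_sums \<gamma> 0 L = {L}"
  proof
    show "partition_sums \<gamma> 0 L \<subseteq> {L}"
    proof
      fix s assume "s \<in> partition_sums \<gamma> 0 L"
      then obtain t n where s: "s = (\<Sum>i<n. dist (\<gamma> (t i)) (\<gamma> (t (Suc i))))"
        and t0: "t 0 = 0" and tn: "t n = L" and mono: "\<forall>i<n. t i \<le> t (Suc i)"
        unfolding partition_sums_def by blast
      have "(\<Sum>i<n. dist (\<gamma> (t i)) (\<gamma> (t (Suc i)))) = (\<Sum>i<n. t (Suc i) - t i)"
      proof (rule sum.cong)
        fix i assume "i \<in> {..<n}"
        then have "i < n" by simp
        then have b1: "t i \<in> {0..L}" "t (Suc i) \<in> {0..L}" "t i \<le> t (Suc i)"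
          using mono_bounds[OF mono, of i] mono_bounds[OF mono, of "Suc i"] mono t0 tn by auto
        show "dist (\<gamma> (t i)) (\<gamma> (t (Suc i))) = t (Suc i) - t i"
          using iso[OF b1(1,2)] b1(3) by simp
      qed simp
      also have "\<dots> = L" using sum_lessThan_telescope[of t n] t0 tn by simp
      finally show "s \<in> {L}" using s by simp
    qed
  next
    have "(\<Sum>i<1. dist (\<gamma> ((\<lambda>i. if i = 0 then 0 else L) i)) (\<gamma> ((\<lambda>i. if i = 0 then 0 else L) (Suc i)))) = L"
      using iso[of 0 L] L0 by simp
    moreover have "\<forall>i<1. (\<lambda>i::nat. if i = 0 then 0 else L) i \<le> (\<lambda>i. if i = 0 then 0 else L) (Suc i)"
      using L0 by simp
    ultimately show "{L} \<subseteq> partition_sums \<gamma> 0 L"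
      unfolding partition_sums_def by (intro subsetI, simp) (rule exI[of _ "\<lambda>i. if i = 0 then 0 else L"], rule exI[of _ 1], simp)
  qed
  have cl: "curve_length \<gamma> 0 L = L" unfolding curve_length_def ps by simp
  have cont: "continuous_on {0..L} \<gamma>"
    unfolding continuous_on_iff
  proof (intro ballI allI impI)
    fix s e assume "s \<in> {0..L}" "(0::real) < e"
    then show "\<exists>d>0. \<forall>x'\<in>{0..L}. dist x' s < d \<longrightarrow> dist (\<gamma> x') (\<gamma> s) < e"
      using iso by (intro exI[of _ e]) (auto simp: dist_real_def)
  qed
  have rect: "rectifiable_curve \<gamma> 0 L"
    unfolding rectifiable_curve_def ps using L0 cont by simp
  let ?S = "{line_integral (\<lambda>z. exp (- \<epsilon> * dist p z)) \<gamma> a b | \<gamma> a b.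
      rectifiable_curve \<gamma> a b \<and> \<gamma> a = x \<and> \<gamma> b = y}"
  have mem: "line_integral (\<lambda>z. exp (- \<epsilon> * dist p z)) \<gamma> 0 L \<in> ?S"
    using rect g0 gL by blast
  have bdd: "bdd_below ?S"
    using li_nonneg[OF assms(2)] by (intro bdd_belowI[of _ 0]) blast
  have "uniformized_dist \<epsilon> p x y \<le> line_integral (\<lambda>z. exp (- \<epsilon> * dist p z)) \<gamma> 0 L"
    unfolding uniformized_dist_def by (rule cInf_lower[OF mem bdd])
  also have "\<dots> \<le> L" using li_le[OF assms(2), of \<gamma> 0 L] cl L0 by simp
  finally show ?thesis unfolding L_def .
qed


lemma key:
  fixes p a b :: "'a::metric_space" and k :: real
  assumes "k \<ge> 0" "dist p a \<ge> k" "dist p b \<ge> k"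
    and ga: "\<And>s t. s\<in>{0..dist p a} \<Longrightarrow> t\<in>{0..dist p a} \<Longrightarrow> dist (\<gamma> s) (\<gamma> t) = \<bar>s - t\<bar>"
    and gb: "\<And>s t. s\<in>{0..dist p b} \<Longrightarrow> t\<in>{0..dist p b} \<Longrightarrow> dist (\<eta> s) (\<eta> t) = \<bar>s - t\<bar>"
    and "\<gamma> (dist p a) = a" "\<eta> (dist p b) = b"
    and c: "dist (\<gamma> k) (\<eta> k) \<le> 1"
  shows "gromov_product p a b \<ge> k - 1/2"
proof -
  have 1: "dist a (\<gamma> k) = dist p a - k" using ga[of "dist p a" k] assms by simp
  have 2: "dist (\<eta> k) b = dist p b - k" using gb[of k "dist p b"] assms by simp
  have "dist a b \<le> dist a (\<gamma> k) + dist (\<gamma> k) (\<eta> k) + dist (\<eta> k) b"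
    by (meson dist_triangle order_trans add_right_mono)
  then have "dist a b \<le> dist p a + dist p b - 2 * k + 1" using 1 2 c by linarith
  then show ?thesis unfolding gromov_product_def by simp
qed

theorem lemma3p4:
  fixes \<delta> \<epsilon> :: real and p :: "'a::metric_space"
    and \<iota> :: "'a \<Rightarrow> 'b::complete_space" and \<xi> :: 'b and xs :: "nat \<Rightarrow> 'a"
  assumes hyp: "gromov_hyperbolic \<delta> TYPE('a)"
    and eps: "\<epsilon> > 0"
    and iso: "\<And>u v. dist (\<iota> u) (\<iota> v) = uniformized_dist \<epsilon> p u v"
    and dense: "closure (range \<iota>) = UNIV"
    and bdry: "\<xi> \<in> closure (range \<iota>) - range \<iota>"
    and conv: "(\<lambda>n. \<iota> (xs n)) \<longlonglongrightarrow> \<xi>"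
  shows "\<exists>r. strict_mono r \<and> gromov_sequence p (xs \<circ> r)"
proof -
  have geo: "geodesic_space TYPE('a)" and prp: "proper_space TYPE('a)"
    using hyp unfolding gromov_hyperbolic_def by blast+
  have cpt: "compact (cball p r)" for r
    using prp bounded_cball closed_cball unfolding proper_space_def by blast
  have div: "\<exists>N. \<forall>n\<ge>N. dist p (xs n) > B" for B
  proof (rule ccontr)
    assume "\<not> ?thesis"
    then have "\<forall>N. \<exists>n\<ge>N. dist p (xs n) \<le> B" using not_less by blast
    then have "infinite {n. dist p (xs n) \<le> B}"
      by (simp add: infinite_nat_iff_unbounded_le)
    then obtain r :: "nat \<Rightarrow> nat" where r: "strict_mono r" "\<And>n. r n \<in> {n. dist p (xs n) \<le> B}"
      using infinite_enumerate by metis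
    have "\<forall>n. (xs \<circ> r) n \<in> cball p B" using r(2) by auto
    then obtain l r' where r': "strict_mono r'" "(xs \<circ> r \<circ> r') \<longlonglongrightarrow> l"
      using compact_imp_seq_compact[OF cpt[of B]] unfolding seq_compact_def by blast
    have lim0: "(\<lambda>n. dist ((xs \<circ> r \<circ> r') n) l) \<longlonglongrightarrow> 0"
      using r'(2) tendsto_dist_iff by blast
    have le: "dist (\<iota> ((xs \<circ> r \<circ> r') n)) (\<iota> l) \<le> dist ((xs \<circ> r \<circ> r') n) l" for n
      using iso ud_le[OF geo, of \<epsilon> p] eps by simp
    have "(\<lambda>n. dist (\<iota> ((xs \<circ> r \<circ> r') n)) (\<iota> l)) \<longlonglongrightarrow> 0"
      by (rule real_tendsto_sandwich[where f="\<lambda>_. 0" and h="\<lambda>n. dist ((xs \<circ> r \<circ> r') n) l"])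
         (use le lim0 in auto)
    then have A: "(\<lambda>n. \<iota> ((xs \<circ> r \<circ> r') n)) \<longlonglongrightarrow> \<iota> l"
      using tendsto_dist_iff by blast
    have B: "(\<lambda>n. \<iota> ((xs \<circ> r \<circ> r') n)) \<longlonglongrightarrow> \<xi>"
      using LIMSEQ_subseq_LIMSEQ[OF conv strict_mono_o[OF r(1) r'(1)]] by (simp add: o_def)
    from LIMSEQ_unique[OF B A] bdry show False by auto
  qed
  have ex: "\<forall>y. \<exists>\<gamma>::real \<Rightarrow> 'a. \<gamma> 0 = p \<and> \<gamma> (dist p y) = y \<and>
      (\<forall>s\<in>{0..dist p y}. \<forall>t\<in>{0..dist p y}. dist (\<gamma> s) (\<gamma> t) = \<bar>s - t\<bar>)"
    using geo unfolding geodesic_space_def by blast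
  obtain \<Gamma> :: "'a \<Rightarrow> real \<Rightarrow> 'a" where
    GG: "\<forall>y. \<Gamma> y 0 = p \<and> \<Gamma> y (dist p y) = y \<and>
      (\<forall>s\<in>{0..dist p y}. \<forall>t\<in>{0..dist p y}. dist (\<Gamma> y s) (\<Gamma> y t) = \<bar>s - t\<bar>)"
    using choice[OF ex] by blast
  then have
    G0: "\<And>y. \<Gamma> y 0 = p" and G1: "\<And>y. \<Gamma> y (dist p y) = y" and
    G2: "\<And>y s t. s\<in>{0..dist p y} \<Longrightarrow> t\<in>{0..dist p y} \<Longrightarrow> dist (\<Gamma> y s) (\<Gamma> y t) = \<bar>s - t\<bar>"
    by auto
  define w where "w n k = \<Gamma> (xs n) (min (real k) (dist p (xs n)))" for n k
  have wc: "w n k \<in> cball p (real k)" for n k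
    using G2[of 0 "xs n" "min (real k) (dist p (xs n))"] G0[of "xs n"] unfolding w_def by auto
  define P where "P k s = (\<exists>N. \<forall>i\<ge>N. \<forall>j\<ge>N. dist (w (s i) k) (w (s j) k) \<le> 1)" for k and s :: "nat \<Rightarrow> nat"
  interpret S: subseqs P
  proof
    fix k s assume "strict_mono (s::nat \<Rightarrow> nat)"
    have "\<forall>n. (\<lambda>n. w (s n) k) n \<in> cball p (real k)" using wc by auto
    then obtain l r' where r': "strict_mono r'" "((\<lambda>n. w (s n) k) \<circ> r') \<longlonglongrightarrow> l"
      using compact_imp_seq_compact[OF cpt[of "real k"], unfolded seq_compact_def, rule_format, of "\<lambda>n. w (s n) k"] by blast
    then have "Cauchy ((\<lambda>n. w (s n) k) \<circ> r')" using LIMSEQ_imp_Cauchy by blast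
    then obtain N where "\<forall>i\<ge>N. \<forall>j\<ge>N. dist (((\<lambda>n. w (s n) k) \<circ> r') i) (((\<lambda>n. w (s n) k) \<circ> r') j) < 1"
      unfolding Cauchy_def by (meson zero_less_one)
    then have "P k (s \<circ> r')" unfolding P_def by (auto intro!: exI[of _ N] less_imp_le)
    then show "\<exists>r'. strict_mono r' \<and> P k (s \<circ> r')" using r' by blast
  qed
  have stable: "P k (s \<circ> r)" if sr: "strict_mono r" and Pks: "P k s" for r s k
  proof -
    obtain N where N: "\<forall>i\<ge>N. \<forall>j\<ge>N. dist (w (s i) k) (w (s j) k) \<le> 1"
      using Pks unfolding P_def by blast
    have "\<forall>i\<ge>N. \<forall>j\<ge>N. dist (w (s (r i)) k) (w (s (r j)) k) \<le> 1"
      using N seq_suble[OF sr] by (meson order_trans)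
    then show ?thesis unfolding P_def by auto
  qed
  have "gromov_sequence p (xs \<circ> S.diagseq)"
    unfolding gromov_sequence_def
  proof
    fix M :: real
    define k where "k = nat \<lceil>M\<rceil> + 1"
    have kM: "real k - 1/2 \<ge> M" unfolding k_def by linarith
    obtain N1 where N1: "\<forall>i\<ge>N1. \<forall>j\<ge>N1. dist (w (S.diagseq (Suc k + i)) k) (w (S.diagseq (Suc k + j)) k) \<le> 1"
      using S.diagseq_holds[OF stable, of k] unfolding P_def by auto
    obtain N2 where N2: "\<forall>n\<ge>N2. dist p (xs n) > real k" using div by blast
    show "\<exists>N. \<forall>n m. n \<ge> N \<and> m \<ge> N \<longrightarrow> M \<le> gromov_product p ((xs \<circ> S.diagseq) n) ((xs \<circ> S.diagseq) m)"
    proof (intro exI[of _ "N1 + Suc k + N2"] allI impI)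
      fix n m assume nm: "N1 + Suc k + N2 \<le> n \<and> N1 + Suc k + N2 \<le> m"
      have d1: "dist (w (S.diagseq n) k) (w (S.diagseq m) k) \<le> 1"
        using N1[rule_format, of "n - Suc k" "m - Suc k"] nm by (simp add: le_diff_conv2)
      have "S.diagseq n \<ge> n" "S.diagseq m \<ge> m" using seq_suble[OF S.subseq_diagseq] by auto
      then have e: "dist p (xs (S.diagseq n)) > real k" "dist p (xs (S.diagseq m)) > real k"
        using N2 nm by auto
      have "gromov_product p (xs (S.diagseq n)) (xs (S.diagseq m)) \<ge> real k - 1/2"
        apply (rule key[where \<gamma> = "\<Gamma> (xs (S.diagseq n))" and \<eta> = "\<Gamma> (xs (S.diagseq m))"])
        using e G1 G2 d1 unfolding w_def by (auto simp: min_def)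
      then show "M \<le> gromov_product p ((xs \<circ> S.diagseq) n) ((xs \<circ> S.diagseq) m)"
        using kM by simp
    qed
  qed
  then show ?thesis using S.subseq_diagseq by blast
qed

end
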